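(* Assume $\mathfrak{r}=2^{\aleph_0}$. Then there is a uniform matroid $U$ on the ground set $\mathbb{N}$ such that the matroid family $(U,U)$ consisting of two copies of $U$ admits a packing and a covering, but does not admit a partitioning.
   Context: Matroids here are possibly infinite: a matroid is a pair $(E,\mathcal{I})$ with $\mathcal{I}\subseteq\mathcal{P}(E)$ such that (1) $\emptyset\in\mathcal{I}$; (2) $\mathcal{I}$ is closed under subsets; (3) for all $I,B\in\mathcal{I}$ with $B$ maximal in $\mathcal{I}$ and $I$ not maximal, there is $x\in B\setminus I$ with $I\cup\{x\}\in\mathcal{I}$; (4) for every $X\subseteq E$, every $I\in\mathcal{I}$ with $I\subseteq X$ extends to a maximal element of $\mathcal{I}\cap\mathcal{P}(X)$. Bases are maximal independent sets; circuits minimal dependent sets. A set $X$ spans $e$ if $e\in X$ or there is a circuit $C\ni e$ with $C\setminus\{e\}\subseteq X$; $S$ is spanning if it spans every element of $E$. A matroid is uniform if whenever $I$ is independent, $e\in I$ and $f\in E\setminus I$, then $(I\setminus\{e\})\cup\{f\}$ is independent. For a family $(M_i\colon i\in K)$ of matroids on $E$: a covering is a family $(R_i\colon i\in K)$ with $R_i$ independent in $M_i$ and $\bigcup_i R_i=E$; a packing is a family $(P_i\colon i\in K)$ of pairwise disjoint sets with $P_i$ spanning in $M_i$; a partitioning is a family $(B_i\colon i\in K)$ partitioning $E$ with each $B_i$ a base of $M_i$. The reaping number $\mathfrak{r}$ is the least cardinal such that there is a family $(A_i\colon i<\mathfrak{r})$ of infinite subsets of $\mathbb{N}$ for which no bipartition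 of $\mathbb{N}$ splits every $A_i$ into two infinite pieces. *)

theory Defs
  imports Main
begin

definition maximal_in :: "'a set set \<Rightarrow> 'a set \<Rightarrow> bool" where
  "maximal_in F B \<longleftrightarrow> B \<in> F \<and> (\<forall>J\<in>F. B \<subseteq> J \<longrightarrow> J = B)"

definition matroid :: "'a set \<Rightarrow> 'a set set \<Rightarrow> bool" where
  "matroid E I \<longleftrightarrow>
     I \<subseteq> Pow E \<and>
     {} \<in> I \<and>
     (\<forall>A\<in>I. \<forall>B. B \<subseteq> A \<longrightarrow> B \<in> I) \<and>
     (\<forall>J\<in>I. \<forall>B\<in>I. maximal_in I B \<and> \<not> maximal_in I J \<longrightarrow>
         (\<exists>x\<in>B - J. insert x J \<in> I)) \<and>
     (\<forall>X. X \<subseteq> E \<longrightarrow> (\<forall>J\<in>I. J \<subseteq> X \<longrightarrow>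
         (\<exists>M. J \<subseteq> M \<and> maximal_in (I \<inter> Pow X) M)))"

definition base :: "'a set set \<Rightarrow> 'a set \<Rightarrow> bool" where
  "base I B \<longleftrightarrow> maximal_in I B"

definition circuit :: "'a set \<Rightarrow> 'a set set \<Rightarrow> 'a set \<Rightarrow> bool" where
  "circuit E I C \<longleftrightarrow> C \<subseteq> E \<and> C \<notin> I \<and> (\<forall>D. D \<subset> C \<longrightarrow> D \<in> I)"

definition spans :: "'a set \<Rightarrow> 'a set set \<Rightarrow> 'a set \<Rightarrow> 'a \<Rightarrow> bool" where
  "spans E I X e \<longleftrightarrow> e \<in> X \<or> (\<exists>C. circuit E I C \<and> e \<in> C \<and> C - {e} \<subseteq> X)"

definition spanning :: "'a set \<Rightarrow> 'a set set \<Rightarrow> 'a set \<Rightarrow> bool" where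
  "spanning E I S \<longleftrightarrow> S \<subseteq> E \<and> (\<forall>e\<in>E. spans E I S e)"

definition uniform_matroid :: "'a set \<Rightarrow> 'a set set \<Rightarrow> bool" where
  "uniform_matroid E I \<longleftrightarrow> matroid E I \<and>
     (\<forall>J\<in>I. \<forall>e\<in>J. \<forall>f\<in>E - J. insert f (J - {e}) \<in> I)"

definition has_covering :: "'a set \<Rightarrow> 'k set \<Rightarrow> ('k \<Rightarrow> 'a set set) \<Rightarrow> bool" where
  "has_covering E K M \<longleftrightarrow>
     (\<exists>R. (\<forall>k\<in>K. R k \<in> M k) \<and> (\<Union>k\<in>K. R k) = E)"

definition has_packing :: "'a set \<Rightarrow> 'k set \<Rightarrow> ('k \<Rightarrow> 'a set set) \<Rightarrow> bool" where
  "has_packing E K M \<longleftrightarrow>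
     (\<exists>P. (\<forall>k\<in>K. spanning E (M k) (P k)) \<and>
          (\<forall>k\<in>K. \<forall>l\<in>K. k \<noteq> l \<longrightarrow> P k \<inter> P l = {}))"

definition has_partitioning :: "'a set \<Rightarrow> 'k set \<Rightarrow> ('k \<Rightarrow> 'a set set) \<Rightarrow> bool" where
  "has_partitioning E K M \<longleftrightarrow>
     (\<exists>B. (\<forall>k\<in>K. base (M k) (B k)) \<and>
          (\<forall>k\<in>K. \<forall>l\<in>K. k \<noteq> l \<longrightarrow> B k \<inter> B l = {}) \<and>
          (\<Union>k\<in>K. B k) = E)"

definition splits :: "nat set \<Rightarrow> nat set \<Rightarrow> bool" where
  "splits X A \<longleftrightarrow> infinite (A \<inter> X) \<and> infinite (A - X)"

definition unsplittable_family :: "nat set set \<Rightarrow> bool" where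
  "unsplittable_family F \<longleftrightarrow> (\<forall>A\<in>F. infinite A) \<and> (\<nexists>X. \<forall>A\<in>F. splits X A)"

text \<open>Since ZFC proves r \<le> 2^aleph0
  (e.g. the family of all infinite sets is unsplittable), r = 2^aleph0 means exactly
  that every unsplittable family has cardinality at least that of the power set of nat.\<close>
definition reaping_eq_continuum :: bool where
  "reaping_eq_continuum \<longleftrightarrow>
     (\<forall>F. unsplittable_family F \<longrightarrow> (card_of (UNIV :: nat set set), card_of F) \<in> ordLeq)"

end

theory Submission imports Defs begin

definition sim :: "nat set \<Rightarrow> nat set \<Rightarrow> bool" where
  "sim B S \<longleftrightarrow> finite (B - S) \<and> finite (S - B) \<and> card (B - S) = card (S - B)"

lemma sim_refl: "sim S S" by (simp add: sim_def)

lemma sim_swap: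
  assumes "sim B S" "e \<in> B" "f \<notin> B"
  shows "sim (insert f (B - {e})) S"
proof -
  have fe: "f \<noteq> e" using assms by auto
  have f1: "finite (B - S)" and f2: "finite (S - B)" and c: "card (B - S) = card (S - B)"
    using assms(1) by (auto simp: sim_def)
  consider "e \<in> S" "f \<in> S" | "e \<in> S" "f \<notin> S" | "e \<notin> S" "f \<in> S" | "e \<notin> S" "f \<notin> S" by blast
  then show ?thesis
  proof cases
    case 1
    have a: "insert f (B - {e}) - S = B - S" using 1 by auto
    have b: "S - insert f (B - {e}) = insert e ((S - B) - {f})" using 1 assms fe by auto
    have "card (insert e ((S - B) - {f})) = card (S - B)"
    proof -
      have "f \<in> S - B" using 1 assms by auto
      then have "card (S - B) > 0" using f2 card_gt_0_iff by blast
      then show ?thesis using 1 assms f2 fe by (simp add: card_Diff_singleton)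
    qed
    then show ?thesis using a b f1 f2 c by (simp add: sim_def)
  next
    case 2
    have a: "insert f (B - {e}) - S = insert f (B - S)" using 2 by auto
    have b: "S - insert f (B - {e}) = insert e (S - B)" using 2 assms fe by auto
    show ?thesis using a b f1 f2 c 2 assms by (simp add: sim_def)
  next
    case 3
    have a: "insert f (B - {e}) - S = (B - S) - {e}" using 3 by auto
    have b: "S - insert f (B - {e}) = (S - B) - {f}" using 3 assms fe by auto
    show ?thesis using a b f1 f2 c 3 assms by (simp add: sim_def card_Diff_singleton)
  next
    case 4
    have a: "insert f (B - {e}) - S = insert f ((B - S) - {e})" using 4 by auto
    have b: "S - insert f (B - {e}) = S - B" using 4 assms fe by auto
    have "card (insert f ((B - S) - {e})) = card (B - S)"
    proof -
      have "e \<in> B - S" using 4 assms by auto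
      then have "card (B - S) > 0" using f1 card_gt_0_iff by blast
      then show ?thesis using 4 assms f1 fe by (simp add: card_Diff_singleton)
    qed
    then show ?thesis using a b f1 f2 c by (simp add: sim_def)
  qed
qed

lemma sim_antichain:
  assumes "sim B S" "sim B' S" "B \<subseteq> B'"
  shows "B = B'"
proof -
  have f: "finite (B - S)" "finite (S - B)" "finite (B' - S)" "finite (S - B')"
    "card (B - S) = card (S - B)" "card (B' - S) = card (S - B')"
    using assms by (auto simp: sim_def)
  have s1: "B - S \<subseteq> B' - S" and s2: "S - B' \<subseteq> S - B" using assms(3) by auto
  have "card (B - S) \<le> card (B' - S)" using s1 f card_mono by blast
  moreover have "card (S - B') \<le> card (S - B)" using s2 f card_mono by blast
  ultimately have e1: "card (B - S) = card (B' - S)" and e2: "card (S - B') = card (S - B)"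
    using f by linarith+
  have "B - S = B' - S" using s1 e1 f card_subset_eq by blast
  moreover have "S - B' = S - B" using s2 e2 f card_subset_eq by blast
  ultimately show ?thesis using assms(3) by blast
qed

lemma fits_D:
  assumes "sim B S" "J \<subseteq> B"
  shows "finite (J - S) \<and> (infinite (S - J) \<or> card (J - S) \<le> card (S - J))"
proof -
  have f: "finite (B - S)" "finite (S - B)" "card (B - S) = card (S - B)"
    using assms by (auto simp: sim_def)
  have fj: "finite (J - S)" using f(1) assms(2) by (meson Diff_mono finite_subset order_refl)
  moreover have "card (J - S) \<le> card (S - J)" if "finite (S - J)"
  proof -
    have "card (J - S) \<le> card (B - S)" using f assms(2) by (intro card_mono) auto
    also have "\<dots> = card (S - B)" by (rule f(3))
    also have "\<dots> \<le> card (S - J)" using that assms(2) by (intro card_mono) auto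
    finally show ?thesis .
  qed
  ultimately show ?thesis by blast
qed

lemma interp:
  assumes JX: "J \<subseteq> X" and fJ: "finite (J - S)" and fX: "finite (S - X)"
    and cJ: "infinite (S - J) \<or> card (J - S) \<le> card (S - J)"
    and cX: "infinite (X - S) \<or> card (S - X) \<le> card (X - S)"
  shows "\<exists>B. sim B S \<and> J \<subseteq> B \<and> B \<subseteq> X"
proof -
  define A where "A = J - S"
  define R where "R = S - X"
  define P where "P = (X - S) - J"
  define Q where "Q = (S \<inter> X) - J"
  have SJ: "S - J = R \<union> Q" and RQ: "R \<inter> Q = {}" using JX by (auto simp: R_def Q_def)
  have XS: "X - S = A \<union> P" and AP: "A \<inter> P = {}" using JX by (auto simp: A_def P_def)
  have fA: "finite A" and fR: "finite R" using fJ fX by (auto simp: A_def R_def)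
  show ?thesis
  proof (cases "card R \<le> card A")
    case True
    have "\<exists>Q'. Q' \<subseteq> Q \<and> finite Q' \<and> card Q' = card A - card R"
    proof (cases "finite Q")
      case True
      with cJ SJ RQ fR have "card A \<le> card R + card Q"
        by (simp add: A_def card_Un_disjoint)
      then have "card A - card R \<le> card Q" by simp
      then show ?thesis using obtain_subset_with_card_n by (metis True rev_finite_subset)
    next
      case False
      then show ?thesis using infinite_arbitrarily_large by blast
    qed
    then obtain Q' where Q': "Q' \<subseteq> Q" "finite Q'" "card Q' = card A - card R" by blast
    define B where "B = (S - R - Q') \<union> A"
    have b1: "B - S = A" by (auto simp: B_def A_def)
    have b2: "S - B = R \<union> Q'" using Q' by (auto simp: B_def A_def R_def Q_def)
    have "card (R \<union> Q') = card R + card Q'" using Q' RQ fR by (intro card_Un_disjoint) auto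
    then have "sim B S" using b1 b2 fA fR Q' True by (simp add: sim_def)
    moreover have "J \<subseteq> B" using JX Q' by (auto simp: B_def A_def R_def Q_def)
    moreover have "B \<subseteq> X" by (auto simp: B_def A_def R_def JX[THEN subsetD])
    ultimately show ?thesis by blast
  next
    case False
    have "\<exists>P'. P' \<subseteq> P \<and> finite P' \<and> card P' = card R - card A"
    proof (cases "finite P")
      case True
      with cX XS AP fA have "card R \<le> card A + card P"
        by (simp add: R_def card_Un_disjoint)
      then have "card R - card A \<le> card P" by simp
      then show ?thesis using obtain_subset_with_card_n by (metis True rev_finite_subset)
    next
      case False
      then show ?thesis using infinite_arbitrarily_large by blast
    qed
    then obtain P' where P': "P' \<subseteq> P" "finite P'" "card P' = card R - card A" by blast
    define B where "B = (S - R) \<union> A \<union> P'"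
    have b1: "B - S = A \<union> P'" using P' by (auto simp: B_def A_def P_def)
    have b2: "S - B = R" using P' by (auto simp: B_def A_def R_def P_def)
    have "card (A \<union> P') = card A + card P'" using P' AP fA by (intro card_Un_disjoint) auto
    then have "sim B S" using b1 b2 fA fR P' False by (simp add: sim_def)
    moreover have "J \<subseteq> B" using JX P' by (auto simp: B_def A_def R_def)
    moreover have "B \<subseteq> X" using P' by (auto simp: B_def A_def R_def P_def JX[THEN subsetD])
    ultimately show ?thesis by blast
  qed
qed


locale seedfam =
  fixes SS :: "nat set set"
  assumes ne: "SS \<noteq> {}"
  and diff: "\<And>S S'. S \<in> SS \<Longrightarrow> S' \<in> SS \<Longrightarrow> S \<noteq> S' \<Longrightarrow> infinite (S - S')"
  and agr: "\<And>S S'. S \<in> SS \<Longrightarrow> S' \<in> SS \<Longrightarrow> infinite {x. (x \<in> S) = (x \<in> S')}"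
  and star: "\<And>J X. J \<subseteq> X \<Longrightarrow> infinite (X - J) \<Longrightarrow>
     \<exists>S\<in>SS. finite (S - J) \<or> finite (X - S) \<or> (finite (J - S) \<and> finite (S - X))"
begin

definition bases :: "nat set set" where
  "bases = {B. \<exists>S\<in>SS. sim B S}"

definition UU :: "nat set set" where
  "UU = {J. \<exists>B\<in>bases. J \<subseteq> B}"

lemma seed_base: "S \<in> SS \<Longrightarrow> S \<in> bases"
  using sim_refl by (auto simp: bases_def)

lemma bases_antichain:
  assumes "B \<in> bases" "B' \<in> bases" "B \<subseteq> B'"
  shows "B = B'"
proof -
  obtain S S' where S: "S \<in> SS" "sim B S" and S': "S' \<in> SS" "sim B' S'"
    using assms by (auto simp: bases_def)
  have "S = S'"
  proof (rule ccontr)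
    assume "S \<noteq> S'"
    then have "infinite (S - S')" using diff S S' by blast
    moreover have "S - S' \<subseteq> (S - B) \<union> (B' - S')" using assms(3) by auto
    moreover have "finite ((S - B) \<union> (B' - S'))" using S S' by (simp add: sim_def)
    ultimately show False using finite_subset by blast
  qed
  then show ?thesis using sim_antichain S S' assms(3) by blast
qed

lemma maximal_iff: "maximal_in UU B \<longleftrightarrow> B \<in> bases"
proof
  assume "maximal_in UU B"
  then have "B \<in> UU" and m: "\<forall>J\<in>UU. B \<subseteq> J \<longrightarrow> J = B" by (auto simp: maximal_in_def)
  then obtain B0 where "B0 \<in> bases" "B \<subseteq> B0" by (auto simp: UU_def)
  moreover then have "B0 \<in> UU" by (auto simp: UU_def)
  ultimately show "B \<in> bases" using m by metis
next
  assume "B \<in> bases"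
  then show "maximal_in UU B"
    unfolding maximal_in_def UU_def using bases_antichain by blast
qed

lemma swap_base:
  assumes "B \<in> bases" "e \<in> B" "f \<notin> B"
  shows "insert f (B - {e}) \<in> bases"
proof -
  obtain S where "S \<in> SS" "sim B S" using assms(1) by (auto simp: bases_def)
  then have "sim (insert f (B - {e})) S" using sim_swap assms(2,3) by blast
  then show ?thesis using \<open>S \<in> SS\<close> by (auto simp: bases_def)
qed

lemma R4:
  assumes J: "J \<in> UU" and JX: "J \<subseteq> X" and X: "X \<notin> UU"
  shows "\<exists>B\<in>bases. J \<subseteq> B \<and> B \<subseteq> X"
proof -
  obtain B0 S0 where S0: "S0 \<in> SS" "sim B0 S0" "J \<subseteq> B0"
    using J by (auto simp: UU_def bases_def)
  have X': "\<And>S B. S \<in> SS \<Longrightarrow> sim B S \<Longrightarrow> \<not> X \<subseteq> B"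
    using X by (auto simp: UU_def bases_def)
  have fitsX: "\<not> (finite (X - S) \<and> (infinite (S - X) \<or> card (X - S) \<le> card (S - X)))"
    if "S \<in> SS" for S
  proof
    assume "finite (X - S) \<and> (infinite (S - X) \<or> card (X - S) \<le> card (S - X))"
    then obtain B where "sim B S" "X \<subseteq> B"
      using interp[of X UNIV S] by auto
    then show False using X' that by blast
  qed
  have same: "S = S0" if "S \<in> SS" "finite (S - J)" for S
  proof (rule ccontr)
    assume "S \<noteq> S0"
    then have "infinite (S - S0)" using diff that S0 by blast
    moreover have "S - S0 \<subseteq> (S - J) \<union> (J - S0)" by auto
    moreover have "finite (J - S0)" using fits_D[OF S0(2,3)] by blast
    ultimately show False using that finite_subset by blast
  qed
  have key: "\<exists>B\<in>bases. J \<subseteq> B \<and> B \<subseteq> X"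
    if S: "S \<in> SS" "finite (J - S)" "finite (S - X)"
       "infinite (S - J) \<or> card (J - S) \<le> card (S - J)" for S
  proof -
    have "infinite (X - S) \<or> card (S - X) \<le> card (X - S)" using fitsX[OF S(1)] S by auto
    then obtain B where "sim B S" "J \<subseteq> B" "B \<subseteq> X" using interp[OF JX S(2,3,4)] by blast
    then show ?thesis using S(1) by (auto simp: bases_def)
  qed
  have fitJ: "finite (J - S) \<and> (infinite (S - J) \<or> card (J - S) \<le> card (S - J))"
    if "S \<in> SS" "finite (J - S)" for S
  proof (cases "finite (S - J)")
    case True
    then have "S = S0" using same that by blast
    then show ?thesis using fits_D[OF S0(2,3)] by blast
  qed (use that in blast)
  show ?thesis
  proof (cases "finite (X - J)")
    case True
    have "finite (S0 - X)"
    proof (rule ccontr)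
      assume inf: "infinite (S0 - X)"
      have "X - S0 \<subseteq> (X - J) \<union> (J - S0)" by auto
      then have "finite (X - S0)" using True fits_D[OF S0(2,3)] finite_subset by blast
      then show False using fitsX[OF S0(1)] inf by blast
    qed
    moreover have "finite (J - S0) \<and> (infinite (S0 - J) \<or> card (J - S0) \<le> card (S0 - J))"
      by (rule fits_D[OF S0(2,3)])
    ultimately show ?thesis using key[OF S0(1)] by blast
  next
    case False
    then obtain S where S: "S \<in> SS"
      and d: "finite (S - J) \<or> finite (X - S) \<or> (finite (J - S) \<and> finite (S - X))"
      using star[OF JX] by blast
    consider "finite (S - J)" | "finite (X - S)" | "finite (J - S)" "finite (S - X)"
      using d by blast
    then show ?thesis
    proof cases
      case 1
      then have "S = S0" using same S by blast
      have "S0 - X \<subseteq> S0 - J" using JX by blast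
      then have "finite (S0 - X)" using 1 \<open>S = S0\<close> finite_subset by blast
      moreover have "finite (J - S0) \<and> (infinite (S0 - J) \<or> card (J - S0) \<le> card (S0 - J))"
        by (rule fits_D[OF S0(2,3)])
      ultimately show ?thesis using key[OF S0(1)] by blast
    next
      case 2
      then have fSX: "finite (S - X)" using fitsX[OF S] by blast
      have fJS: "finite (J - S)" using 2 JX finite_subset[of "J - S" "X - S"] by blast
      have "(X - J) - (X - S) \<subseteq> S - J" by auto
      moreover have "infinite ((X - J) - (X - S))" using False 2 by simp
      ultimately have "infinite (S - J)" using finite_subset by blast
      then show ?thesis using key[OF S fJS fSX] by blast
    next
      case 3
      then show ?thesis using key[OF S 3(1) 3(2)] fitJ[OF S 3(1)] by blast
    qed
  qed
qed

lemma matroid_UU: "matroid UNIV UU"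
  unfolding matroid_def
proof (intro conjI ballI allI impI)
  show "UU \<subseteq> Pow UNIV" by simp
  show "{} \<in> UU" using ne seed_base by (auto simp: UU_def)
next
  fix A B assume "A \<in> UU" "B \<subseteq> A" then show "B \<in> UU" by (auto simp: UU_def)
next
  fix J B assume J: "J \<in> UU" and "B \<in> UU" and mm: "maximal_in UU B \<and> \<not> maximal_in UU J"
  then have B: "B \<in> bases" and nJ: "J \<notin> bases" using maximal_iff by auto
  obtain B' where B': "B' \<in> bases" "J \<subseteq> B'" using J by (auto simp: UU_def)
  then obtain e where e: "e \<in> B'" "e \<notin> J" using nJ by (metis subsetI subset_antisym)
  show "\<exists>x\<in>B - J. insert x J \<in> UU"
  proof (cases "B \<subseteq> B'")
    case True
    then have "B = B'" using bases_antichain B B' by blast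
    moreover have "insert e J \<subseteq> B'" using e B' by auto
    ultimately have "insert e J \<in> UU" "e \<in> B - J" unfolding UU_def using B' e by blast+
    then show ?thesis by blast
  next
    case False
    then obtain x where x: "x \<in> B" "x \<notin> B'" by blast
    then have "insert x (B' - {e}) \<in> bases" using swap_base B' e by blast
    moreover have "insert x J \<subseteq> insert x (B' - {e})" using B' e by auto
    ultimately have "insert x J \<in> UU" unfolding UU_def by blast
    moreover have "x \<in> B - J" using x B' by auto
    ultimately show ?thesis by blast
  qed
next
  fix X :: "nat set" and J assume "X \<subseteq> UNIV" "J \<in> UU" "J \<subseteq> X"
  show "\<exists>M. J \<subseteq> M \<and> maximal_in (UU \<inter> Pow X) M"
  proof (cases "X \<in> UU")
    case True
    then show ?thesis using \<open>J \<subseteq> X\<close> by (auto simp: maximal_in_def)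
  next
    case False
    then obtain B where B: "B \<in> bases" "J \<subseteq> B" "B \<subseteq> X" using R4 \<open>J \<in> UU\<close> \<open>J \<subseteq> X\<close> by blast
    have "maximal_in (UU \<inter> Pow X) B"
      using B maximal_iff[of B] by (auto simp: maximal_in_def UU_def)
    then show ?thesis using B by blast
  qed
qed

lemma uniform_UU: "uniform_matroid UNIV UU"
  unfolding uniform_matroid_def
proof (intro conjI ballI matroid_UU)
  fix J e f assume J: "J \<in> UU" and e: "e \<in> J" and f: "f \<in> UNIV - J"
  obtain B where B: "B \<in> bases" "J \<subseteq> B" using J by (auto simp: UU_def)
  show "insert f (J - {e}) \<in> UU"
  proof (cases "f \<in> B")
    case True
    then have "insert f (J - {e}) \<subseteq> B" using B by auto
    then show ?thesis unfolding UU_def using B by blast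
  next
    case False
    then have "insert f (B - {e}) \<in> bases" using swap_base B e by blast
    moreover have "insert f (J - {e}) \<subseteq> insert f (B - {e})" using B by auto
    ultimately show ?thesis unfolding UU_def by blast
  qed
qed

lemma spanning_base:
  assumes "B \<in> bases" "B \<subseteq> P"
  shows "spanning UNIV UU P"
  unfolding spanning_def spans_def
proof (intro conjI ballI)
  fix e :: nat
  show "e \<in> P \<or> (\<exists>C. circuit UNIV UU C \<and> e \<in> C \<and> C - {e} \<subseteq> P)"
  proof (cases "e \<in> P")
    case False
    then have eB: "e \<notin> B" using assms by auto
    have "circuit UNIV UU (insert e B)"
      unfolding circuit_def
    proof (intro conjI allI impI)
      show "insert e B \<notin> UU"
      proof
        assume "insert e B \<in> UU"
        then obtain B' where "B' \<in> bases" "insert e B \<subseteq> B'" by (auto simp: UU_def)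
        then have "B = B'" using bases_antichain[of B B'] assms by blast
        then show False using \<open>insert e B \<subseteq> B'\<close> eB by blast
      qed
    next
      fix D assume D: "D \<subset> insert e B"
      show "D \<in> UU"
      proof (cases "e \<in> D")
        case False
        then have "D \<subseteq> B" using D by blast
        then show ?thesis unfolding UU_def using assms by blast
      next
        case True
        then obtain x where x: "x \<in> B" "x \<notin> D" using D by blast
        then have "insert e (B - {x}) \<in> bases" using swap_base assms eB by blast
        moreover have "D \<subseteq> insert e (B - {x})" using D x by auto
        ultimately show ?thesis unfolding UU_def by blast
      qed
    qed simp
    moreover have "insert e B - {e} \<subseteq> P" using assms by blast
    ultimately show ?thesis by blast
  qed simp
qed simp

lemma no_compl_bases:
  assumes "B \<in> bases" "- B \<in> bases"
  shows False
proof -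
  obtain S S' where S: "S \<in> SS" "sim B S" and S': "S' \<in> SS" "sim (- B) S'"
    using assms by (auto simp: bases_def)
  have "{x. (x \<in> S) = (x \<in> S')} \<subseteq> (B - S) \<union> (S - B) \<union> (- B - S') \<union> (S' - - B)" by auto
  moreover have "finite ((B - S) \<union> (S - B) \<union> (- B - S') \<union> (S' - - B))"
    using S S' by (simp add: sim_def)
  ultimately show False using agr[OF S(1) S'(1)] finite_subset by blast
qed

end


unbundle cardinal_syntax

lemma small_finite: "finite (A :: 'a set) \<Longrightarrow> infinite (C :: 'b set) \<Longrightarrow> |A| <o |C|"
  using finite_ordLess_infinite[OF card_of_Well_order card_of_Well_order] by (simp add: Field_card_of)

lemma inf_PN: "infinite (UNIV :: nat set set)"
  by (metis finite_Pow_iff infinite_UNIV_nat Pow_UNIV)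

definition starprop :: "nat set \<Rightarrow> nat set \<Rightarrow> nat set \<Rightarrow> bool" where
  "starprop J X S \<longleftrightarrow> finite (S - J) \<or> finite (X - S) \<or> (finite (J - S) \<and> finite (S - X))"

definition need :: "nat set \<times> nat set \<Rightarrow> nat set set \<Rightarrow> bool" where
  "need p G \<longleftrightarrow> fst p \<subseteq> snd p \<and> infinite (snd p - fst p) \<and> (\<forall>S\<in>G. \<not> starprop (fst p) (snd p) S)"

definition good :: "nat set \<times> nat set \<Rightarrow> nat set set \<Rightarrow> nat set \<Rightarrow> bool" where
  "good p G Y \<longleftrightarrow> fst p \<subseteq> Y \<and> Y \<subseteq> snd p \<and> infinite Y \<and>
     (\<forall>S\<in>G. infinite (S - Y) \<and> infinite (Y - S) \<and> infinite {x. (x \<in> S) = (x \<in> Y)})"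

lemma exists_good:
  assumes R: reaping_eq_continuum and N: "need p G" and small: "|G| <o |UNIV :: nat set set|"
  shows "\<exists>Y. good p G Y"
proof -
  obtain J X where p: "p = (J, X)" by (cases p)
  have JX: "J \<subseteq> X" and Dinf: "infinite (X - J)" and ns: "\<And>S. S \<in> G \<Longrightarrow> \<not> starprop J X S"
    using N by (auto simp: need_def p)
  define D where "D = X - J"
  define F0 where "F0 = {D} \<union> (\<lambda>S. D \<inter> S) ` G \<union> (\<lambda>S. D - S) ` G"
  define F where "F = {A \<in> F0. infinite A}"
  have "|F0| <o |UNIV :: nat set set|"
  proof -
    have "|{D}| <o |UNIV :: nat set set|" using small_finite inf_PN by blast
    moreover have "|(\<lambda>S. D \<inter> S) ` G| <o |UNIV :: nat set set|"
      using card_of_image ordLeq_ordLess_trans small by blast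
    moreover have "|(\<lambda>S. D - S) ` G| <o |UNIV :: nat set set|"
      using card_of_image ordLeq_ordLess_trans small by blast
    ultimately show ?thesis unfolding F0_def using card_of_Un_ordLess_infinite inf_PN by blast
  qed
  then have "|F| <o |UNIV :: nat set set|"
    using card_of_mono1[of F F0] ordLeq_ordLess_trans by (auto simp: F_def)
  then have "\<not> unsplittable_family F"
    using R not_ordLess_ordLeq unfolding reaping_eq_continuum_def by blast
  then obtain Z where Z: "\<And>A. A \<in> F \<Longrightarrow> splits Z A"
    unfolding unsplittable_family_def F_def by blast
  have spl: "infinite (A \<inter> Z) \<and> infinite (A - Z)" if "A \<in> F0" "infinite A" for A
    using Z[of A] that by (auto simp: F_def splits_def)
  have sD: "infinite (D \<inter> Z)" "infinite (D - Z)" using spl[of D] Dinf by (auto simp: F0_def D_def)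
  have sI: "infinite ((D \<inter> S) \<inter> Z) \<and> infinite ((D \<inter> S) - Z)" if "S \<in> G" "infinite (D \<inter> S)" for S
    using spl[of "D \<inter> S"] that by (auto simp: F0_def)
  have sM: "infinite ((D - S) \<inter> Z) \<and> infinite ((D - S) - Z)" if "S \<in> G" "infinite (D - S)" for S
    using spl[of "D - S"] that by (auto simp: F0_def)
  define Y where "Y = J \<union> (Z \<inter> D)"
  have "good p G Y"
    unfolding good_def p fst_conv snd_conv
  proof (intro conjI ballI)
    show "J \<subseteq> Y" by (auto simp: Y_def)
    show "Y \<subseteq> X" using JX by (auto simp: Y_def D_def)
    show "infinite Y" using sD(1) by (metis Int_commute Un_upper2 Y_def finite_subset)
  next
    fix S assume S: "S \<in> G"
    have nsS: "infinite (S - J)" "infinite (X - S)" "\<not> (finite (J - S) \<and> finite (S - X))"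
      using ns[OF S] by (auto simp: starprop_def)
    show "infinite (Y - S)"
    proof (cases "finite (J - S)")
      case True
      have "X - S \<subseteq> (J - S) \<union> (D - S)" by (auto simp: D_def)
      then have "infinite (D - S)" using True nsS(2) by (meson finite_Un finite_subset)
      then have "infinite ((D - S) \<inter> Z)" using sM S by blast
      moreover have "(D - S) \<inter> Z \<subseteq> Y - S" by (auto simp: Y_def)
      ultimately show ?thesis using finite_subset by blast
    next
      case False
      moreover have "J - S \<subseteq> Y - S" by (auto simp: Y_def)
      ultimately show ?thesis using finite_subset by blast
    qed
    show "infinite (S - Y)"
    proof (cases "finite (S - X)")
      case True
      have "S - J \<subseteq> (S - X) \<union> (D \<inter> S)" by (auto simp: D_def)
      then have "infinite (D \<inter> S)" using True nsS(1) by (meson finite_Un finite_subset)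
      then have "infinite ((D \<inter> S) - Z)" using sI S by blast
      moreover have "(D \<inter> S) - Z \<subseteq> S - Y" by (auto simp: Y_def D_def)
      ultimately show ?thesis using finite_subset by blast
    next
      case False
      moreover have "S - X \<subseteq> S - Y" using JX by (auto simp: Y_def D_def)
      ultimately show ?thesis using finite_subset by blast
    qed
    show "infinite {x. (x \<in> S) = (x \<in> Y)}"
    proof (cases "finite (D \<inter> S)")
      case False
      then have "infinite ((D \<inter> S) \<inter> Z)" using sI S by blast
      moreover have "(D \<inter> S) \<inter> Z \<subseteq> {x. (x \<in> S) = (x \<in> Y)}" by (auto simp: Y_def)
      ultimately show ?thesis using finite_subset by blast
    next
      case True
      have "D \<subseteq> (D \<inter> S) \<union> (D - S)" by auto
      then have "infinite (D - S)" using True Dinf by (metis D_def finite_Un finite_subset)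
      then have "infinite ((D - S) - Z)" using sM S by blast
      moreover have "(D - S) - Z \<subseteq> {x. (x \<in> S) = (x \<in> Y)}" by (auto simp: Y_def D_def)
      ultimately show ?thesis using finite_subset by blast
    qed
  qed
  then show ?thesis by blast
qed


definition rr :: "(nat set \<times> nat set) rel" where "rr = |UNIV :: (nat set \<times> nat set) set|"

definition A0 :: "nat set" where "A0 = {n. n mod 5 \<in> {0,1,2}}"
definition B0 :: "nat set" where "B0 = {n. n mod 5 \<in> {2,3,4}}"
definition C0 :: "nat set" where "C0 = {n. n mod 5 \<in> {0,3}}"
definition D0 :: "nat set" where "D0 = {n. n mod 5 \<in> {1,4}}"
definition SS0 :: "nat set set" where "SS0 = {A0, B0, C0, D0}"

definition HH :: "((nat set \<times> nat set) \<Rightarrow> nat set set) \<Rightarrow> (nat set \<times> nat set) \<Rightarrow> nat set set" where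
  "HH g a = (if need a (SS0 \<union> \<Union>(g ` underS rr a))
             then {SOME Y. good a (SS0 \<union> \<Union>(g ` underS rr a)) Y} else {})"

definition gg :: "(nat set \<times> nat set) \<Rightarrow> nat set set" where "gg = wfrec (rr - Id) HH"
definition prev :: "(nat set \<times> nat set) \<Rightarrow> nat set set" where "prev a = SS0 \<union> \<Union>(gg ` underS rr a)"
definition SSf :: "nat set set" where "SSf = SS0 \<union> \<Union>(range gg)"

lemma wo_rr: "Well_order rr" by (simp add: rr_def card_of_Well_order)
lemma Field_rr: "Field rr = UNIV" by (simp add: rr_def Field_card_of)

lemma wf_rr: "wf (rr - Id)"
  using wo_rr wo_rel.WF unfolding wo_rel_def by blast

lemma gg_eq: "gg a = (if need a (prev a) then {SOME Y. good a (prev a) Y} else {})"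
proof -
  have "gg a = HH (cut gg (rr - Id) a) a" unfolding gg_def by (rule wfrec[OF wf_rr])
  moreover have "(cut gg (rr - Id) a) ` underS rr a = gg ` underS rr a"
    by (intro image_cong refl) (auto simp: cut_apply underS_def)
  ultimately show ?thesis by (simp add: HH_def prev_def)
qed

lemma rr_iso: "rr =o |UNIV :: nat set set|"
  using card_of_Times_same_infinite[OF inf_PN] by (simp add: rr_def)

lemma prev_small: "|prev a| <o |UNIV :: nat set set|"
proof -
  define c where "c b = (SOME Y. good b (prev b) Y)" for b
  have gc: "gg b \<subseteq> {c b}" for b using gg_eq[of b] by (simp add: c_def)
  have sub: "prev a \<subseteq> SS0 \<union> c ` underS rr a"
    unfolding prev_def using gc by blast
  have "|underS rr a| <o rr"
    using card_of_underS[of rr a] Field_rr by (simp add: rr_def card_of_Card_order)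
  then have "|underS rr a| <o |UNIV :: nat set set|" using rr_iso ordLess_ordIso_trans by blast
  then have "|c ` underS rr a| <o |UNIV :: nat set set|" using card_of_image ordLeq_ordLess_trans by blast
  moreover have "finite SS0" by (simp add: SS0_def)
  then have "|SS0| <o |UNIV :: nat set set|" using small_finite inf_PN by blast
  ultimately have "|SS0 \<union> c ` underS rr a| <o |UNIV :: nat set set|"
    using card_of_Un_ordLess_infinite inf_PN by blast
  then show ?thesis using card_of_mono1[OF sub] ordLeq_ordLess_trans by blast
qed

lemma gg_good:
  assumes R: reaping_eq_continuum and Y: "Y \<in> gg a"
  shows "good a (prev a) Y \<and> need a (prev a)"
proof -
  have n: "need a (prev a)" and Ye: "Y = (SOME Y. good a (prev a) Y)" using Y gg_eq[of a] by (auto split: if_splits)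
  have "\<exists>Y. good a (prev a) Y" using exists_good[OF R n prev_small] .
  then show ?thesis using Ye n someI_ex by metis
qed

definition compat :: "nat set \<Rightarrow> nat set \<Rightarrow> bool" where
  "compat S S' \<longleftrightarrow> infinite {x. (x \<in> S) = (x \<in> S')} \<and> (S \<noteq> S' \<longrightarrow> infinite (S - S') \<and> infinite (S' - S))"

lemma compat_I:
  assumes "infinite {x. (x \<in> S) = (x \<in> S')}" "infinite (S - S')" "infinite (S' - S)"
  shows "compat S S'"
  using assms by (simp add: compat_def)

lemma compat_sym: "compat S S' \<Longrightarrow> compat S' S"
proof -
  assume c: "compat S S'"
  have e: "{x. (x \<in> S') = (x \<in> S)} = {x. (x \<in> S) = (x \<in> S')}" by blast
  have "infinite {x. (x \<in> S) = (x \<in> S')}" using c by (simp add: compat_def)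
  then have "infinite {x. (x \<in> S') = (x \<in> S)}" by (subst e)
  moreover have "S' \<noteq> S \<longrightarrow> infinite (S' - S) \<and> infinite (S - S')" using c by (auto simp: compat_def)
  ultimately show "compat S' S" by (simp add: compat_def)
qed

lemma compat_refl: "compat S S" by (simp add: compat_def)

lemma good_compat: "good a G Y \<Longrightarrow> S \<in> G \<Longrightarrow> compat S Y"
  unfolding good_def compat_def by blast

lemma res_inf: "k < 5 \<Longrightarrow> {n::nat. n mod 5 = k} \<subseteq> A \<Longrightarrow> infinite A"
proof -
  assume k: "k < 5" and sub: "{n::nat. n mod 5 = k} \<subseteq> A"
  have r: "range (\<lambda>m::nat. 5 * m + k) \<subseteq> {n::nat. n mod 5 = k}" using k by auto
  have "inj (\<lambda>m::nat. 5 * m + k)" by (auto simp: inj_on_def)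
  then have "infinite (range (\<lambda>m::nat. 5 * m + k))" by (metis finite_imageD infinite_UNIV_nat)
  then have "infinite {n::nat. n mod 5 = k}" using r finite_subset by blast
  then show ?thesis using sub finite_subset by blast
qed

lemma SS0_compat: "S \<in> SS0 \<Longrightarrow> S' \<in> SS0 \<Longrightarrow> compat S S'"
proof -
  have ab: "compat A0 B0"
    by (rule compat_I[OF res_inf[of 2] res_inf[of 0] res_inf[of 3]]) (auto simp: A0_def B0_def)
  have ac: "compat A0 C0"
    by (rule compat_I[OF res_inf[of 0] res_inf[of 1] res_inf[of 3]]) (auto simp: A0_def C0_def)
  have ad: "compat A0 D0"
    by (rule compat_I[OF res_inf[of 1] res_inf[of 0] res_inf[of 4]]) (auto simp: A0_def D0_def)
  have bc: "compat B0 C0"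
    by (rule compat_I[OF res_inf[of 3] res_inf[of 2] res_inf[of 0]]) (auto simp: B0_def C0_def)
  have bd: "compat B0 D0"
    by (rule compat_I[OF res_inf[of 4] res_inf[of 2] res_inf[of 1]]) (auto simp: B0_def D0_def)
  have cd: "compat C0 D0"
    by (rule compat_I[OF res_inf[of 2] res_inf[of 0] res_inf[of 1]]) (auto simp: C0_def D0_def)
  assume "S \<in> SS0" "S' \<in> SS0"
  then show ?thesis unfolding SS0_def
    using ab ac ad bc bd cd compat_sym compat_refl by auto
qed

lemma SSf_compat:
  assumes R: reaping_eq_continuum and S: "S \<in> SSf" and S': "S' \<in> SSf"
  shows "compat S S'"
proof -
  have one: "compat S Y" if "S \<in> SS0" "Y \<in> gg a" for S Y a
  proof -
    have "good a (prev a) Y" using gg_good[OF R that(2)] by blast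
    moreover have "S \<in> prev a" using that(1) by (simp add: prev_def)
    ultimately show ?thesis using good_compat by blast
  qed
  have two: "compat Y Y'" if "Y \<in> gg a" "Y' \<in> gg b" for Y Y' a b
  proof (cases "a = b")
    case True
    then have "Y = Y'" using that gg_eq[of a] by (auto split: if_splits)
    then show ?thesis by (simp add: compat_refl)
  next
    case False
    then have "(a, b) \<in> rr \<or> (b, a) \<in> rr"
      using wo_rel.TOTALS[of rr] wo_rr Field_rr unfolding wo_rel_def by blast
    then have "a \<in> underS rr b \<or> b \<in> underS rr a" using False by (auto simp: underS_def)
    then show ?thesis
    proof
      assume "a \<in> underS rr b"
      then have "Y \<in> prev b" using that(1) by (auto simp: prev_def)
      then show ?thesis using gg_good[OF R that(2)] good_compat by blast
    next
      assume "b \<in> underS rr a"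
      then have "Y' \<in> prev a" using that(2) by (auto simp: prev_def)
      then show ?thesis using gg_good[OF R that(1)] good_compat compat_sym by blast
    qed
  qed
  show ?thesis using S S' SS0_compat one two compat_sym unfolding SSf_def by blast
qed

lemma SSf_star:
  assumes R: reaping_eq_continuum and JX: "J \<subseteq> X" and inf: "infinite (X - J)"
  shows "\<exists>S\<in>SSf. finite (S - J) \<or> finite (X - S) \<or> (finite (J - S) \<and> finite (S - X))"
proof (cases "need (J, X) (prev (J, X))")
  case False
  then obtain S where "S \<in> prev (J, X)" "starprop J X S" using JX inf by (auto simp: need_def)
  moreover have "prev (J, X) \<subseteq> SSf" by (auto simp: prev_def SSf_def)
  ultimately show ?thesis unfolding starprop_def by blast
next
  case True
  define Y where "Y = (SOME Y. good (J, X) (prev (J, X)) Y)"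
  have Yg: "Y \<in> gg (J, X)" using gg_eq[of "(J, X)"] True by (simp add: Y_def)
  then have "good (J, X) (prev (J, X)) Y" using gg_good[OF R] by blast
  then have "J \<subseteq> Y" "Y \<subseteq> X" by (auto simp: good_def)
  then have "finite (J - Y)" "finite (Y - X)" by (metis Diff_eq_empty_iff finite.emptyI)+
  moreover have "Y \<in> SSf" using Yg by (auto simp: SSf_def)
  ultimately show ?thesis by blast
qed

lemma seedfam_SSf:
  assumes R: reaping_eq_continuum
  shows "seedfam SSf"
proof
  show "SSf \<noteq> {}" by (simp add: SSf_def SS0_def)
next
  fix S S' assume "S \<in> SSf" "S' \<in> SSf" "S \<noteq> S'"
  then show "infinite (S - S')" using SSf_compat[OF R] by (auto simp: compat_def)
next
  fix S S' assume "S \<in> SSf" "S' \<in> SSf"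
  then show "infinite {x. (x \<in> S) = (x \<in> S')}" using SSf_compat[OF R] by (auto simp: compat_def)
next
  fix J X :: "nat set" assume "J \<subseteq> X" "infinite (X - J)"
  then show "\<exists>S\<in>SSf. finite (S - J) \<or> finite (X - S) \<or> (finite (J - S) \<and> finite (S - X))"
    using SSf_star[OF R] by blast
qed

theorem theorem5p1:
  assumes "reaping_eq_continuum"
  shows "\<exists>U :: nat set set. uniform_matroid (UNIV :: nat set) U \<and>
           has_packing UNIV (UNIV :: bool set) (\<lambda>_. U) \<and>
           has_covering UNIV (UNIV :: bool set) (\<lambda>_. U) \<and>
           \<not> has_partitioning UNIV (UNIV :: bool set) (\<lambda>_. U)"
proof -
  interpret sf: seedfam SSf using seedfam_SSf[OF assms] .
  have inS: "A0 \<in> SSf" "B0 \<in> SSf" "C0 \<in> SSf" "D0 \<in> SSf" by (auto simp: SSf_def SS0_def)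
  have pack: "has_packing UNIV (UNIV :: bool set) (\<lambda>_. sf.UU)"
    unfolding has_packing_def
  proof (intro exI[of _ "\<lambda>k. if k then C0 else D0"] conjI ballI impI)
    fix k :: bool
    have "spanning UNIV sf.UU C0" by (rule sf.spanning_base[OF sf.seed_base[OF inS(3)] subset_refl])
    moreover have "spanning UNIV sf.UU D0" by (rule sf.spanning_base[OF sf.seed_base[OF inS(4)] subset_refl])
    ultimately show "spanning UNIV sf.UU (if k then C0 else D0)" by simp
  next
    fix k l :: bool assume "k \<noteq> l"
    moreover have "C0 \<inter> D0 = {}" by (auto simp: C0_def D0_def)
    ultimately show "(if k then C0 else D0) \<inter> (if l then C0 else D0) = {}" by auto
  qed
  have cov: "has_covering UNIV (UNIV :: bool set) (\<lambda>_. sf.UU)"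
    unfolding has_covering_def
  proof (intro exI[of _ "\<lambda>k. if k then A0 else B0"] conjI ballI)
    fix k :: bool
    have "A0 \<in> sf.UU" "B0 \<in> sf.UU" using sf.seed_base inS unfolding sf.UU_def by blast+
    then show "(if k then A0 else B0) \<in> sf.UU" by auto
  next
    have "n \<in> A0 \<union> B0" for n :: nat
    proof -
      have "n mod 5 < 5" by simp
      then have "n mod 5 = 0 \<or> n mod 5 = 1 \<or> n mod 5 = 2 \<or> n mod 5 = 3 \<or> n mod 5 = 4" by presburger
      then show ?thesis by (auto simp: A0_def B0_def)
    qed
    then have "A0 \<union> B0 = UNIV" by blast
    moreover have "(\<Union>k\<in>(UNIV :: bool set). if k then A0 else B0) = A0 \<union> B0"
      by (auto simp: UNIV_bool)
    ultimately show "(\<Union>k\<in>(UNIV :: bool set). if k then A0 else B0) = UNIV" by simp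
  qed
  have nopart: "\<not> has_partitioning UNIV (UNIV :: bool set) (\<lambda>_. sf.UU)"
  proof
    assume "has_partitioning UNIV (UNIV :: bool set) (\<lambda>_. sf.UU)"
    then obtain B :: "bool \<Rightarrow> nat set" where bdu: "(\<forall>k\<in>UNIV. base sf.UU (B k)) \<and>
          (\<forall>k\<in>UNIV. \<forall>l\<in>UNIV. k \<noteq> l \<longrightarrow> B k \<inter> B l = {}) \<and> (\<Union>k\<in>UNIV. B k) = UNIV"
      unfolding has_partitioning_def by (elim exE) assumption
    have "base sf.UU (B True)" "base sf.UU (B False)" using bdu by simp_all
    then have "B True \<in> sf.bases" "B False \<in> sf.bases"
      using sf.maximal_iff unfolding base_def by blast+
    moreover have "B False = - B True"
    proof -
      have dd: "\<And>k l. k \<noteq> l \<Longrightarrow> B k \<inter> B l = {}" using bdu by blast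
      have "B True \<inter> B False = {}" using dd[of True False] by simp
      moreover have "B True \<union> B False = UNIV"
        using bdu by (auto simp: UNIV_bool)
      ultimately show ?thesis by blast
    qed
    ultimately show False using sf.no_compl_bases by metis
  qed
  show ?thesis using sf.uniform_UU pack cov nopart by blast
qed

end
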